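(* Let $A$ be a $2\times n$ array with pairwise distinct entries and $k\ge 1$. Then the graph $G_{12}$ on $A$ is a $k$-page graph, i.e. there are no $k+1$ edges $(i_1,j_1),\dots,(i_{k+1},j_{k+1})\in E(G_{12})$ with $i_1<i_2<\dots<i_{k+1}<j_1<j_2<\dots<j_{k+1}$.
   Context: For a $2\times n$ array $A$ with distinct entries from a total order, the graph $G_{12}$ has vertex set $\{1,\dots,n\}$, and $(i,j)$ with $i<j$ is an edge iff (i) $A[1][i]<A[2][j]$; (ii) at most $k-1$ positions in $A[1..2][i..j]$ (rows 1 and 2, columns $i..j$) hold values larger than both $A[1][i]$ and $A[2][j]$; and (iii) there is no $j'>i$ such that $(i,j')$ satisfies (i) and (ii) and $A[1][i]<A[2][j']<A[2][j]$. *)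

theory Defs
  imports Main
begin

text \<open>A 2 x n array is modelled as A :: nat \<Rightarrow> nat \<Rightarrow> 'a, where A r c is the entry
  in row r \<in> {1,2} and column c \<in> {1..n}.\<close>

text \<open>Conditions (i) and (ii) for the pair (i,j).\<close>
definition G12_cond :: "nat \<Rightarrow> (nat \<Rightarrow> nat \<Rightarrow> 'a::linorder) \<Rightarrow> nat \<Rightarrow> nat \<Rightarrow> bool" where
  "G12_cond k A i j \<longleftrightarrow>
     A 1 i < A 2 j \<and>
     card {(r, c). r \<in> {1::nat, 2} \<and> c \<in> {i..j} \<and> A r c > A 1 i \<and> A r c > A 2 j} \<le> k - 1"

definition G12_edge :: "nat \<Rightarrow> nat \<Rightarrow> (nat \<Rightarrow> nat \<Rightarrow> 'a::linorder) \<Rightarrow> nat \<Rightarrow> nat \<Rightarrow> bool" where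
  "G12_edge n k A i j \<longleftrightarrow>
     1 \<le> i \<and> i < j \<and> j \<le> n \<and> G12_cond k A i j \<and>
     \<not> (\<exists>j'. i < j' \<and> j' \<le> n \<and> G12_cond k A i j' \<and> A 1 i < A 2 j' \<and> A 2 j' < A 2 j)"

end

theory Submission
  imports Defs
begin

lemma neqA:
  assumes "inj_on (\<lambda>(r, c). A r c) ({1, 2} \<times> {1..n})"
    "r \<in> {1,2}" "r' \<in> {1,2}" "c \<in> {1..n}" "c' \<in> {1..n}" "(r,c) \<noteq> (r',c')"
  shows "A r c \<noteq> A r' c'"
  using assms unfolding inj_on_def by fastforce

theorem lemma8:
  fixes A :: "nat \<Rightarrow> nat \<Rightarrow> 'a::linorder" and n k :: nat
  assumes distinct: "inj_on (\<lambda>(r, c). A r c) ({1, 2} \<times> {1..n})"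
    and k: "k \<ge> 1"
  shows "\<not> (\<exists>I J :: nat \<Rightarrow> nat.
             strict_mono_on {..k} I \<and> strict_mono_on {..k} J \<and> I k < J 0 \<and>
             (\<forall>t\<le>k. G12_edge n k A (I t) (J t)))"
proof
  assume "\<exists>I J :: nat \<Rightarrow> nat.
             strict_mono_on {..k} I \<and> strict_mono_on {..k} J \<and> I k < J 0 \<and>
             (\<forall>t\<le>k. G12_edge n k A (I t) (J t))"
  then obtain I J :: "nat \<Rightarrow> nat" where sI: "strict_mono_on {..k} I" and sJ: "strict_mono_on {..k} J"
    and IJ: "I k < J 0" and E: "\<And>t. t \<le> k \<Longrightarrow> G12_edge n k A (I t) (J t)" by blast
  have Ilt: "\<And>a b. a < b \<Longrightarrow> b \<le> k \<Longrightarrow> I a < I b" using sI by (auto intro: strict_mono_onD)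
  have Jlt: "\<And>a b. a < b \<Longrightarrow> b \<le> k \<Longrightarrow> J a < J b" using sJ by (auto intro: strict_mono_onD)
  have Ile: "\<And>a b. a \<le> b \<Longrightarrow> b \<le> k \<Longrightarrow> I a \<le> I b" using Ilt by (metis le_less)
  have Jle: "\<And>a b. a \<le> b \<Longrightarrow> b \<le> k \<Longrightarrow> J a \<le> J b" using Jlt by (metis le_less)
  have I1: "\<And>t. t \<le> k \<Longrightarrow> 1 \<le> I t" and IJt: "\<And>t. t \<le> k \<Longrightarrow> I t < J t"
    and Jn: "\<And>t. t \<le> k \<Longrightarrow> J t \<le> n" and C: "\<And>t. t \<le> k \<Longrightarrow> G12_cond k A (I t) (J t)"
    and N: "\<And>t j'. t \<le> k \<Longrightarrow> I t < j' \<Longrightarrow> j' \<le> n \<Longrightarrow> G12_cond k A (I t) j' \<Longrightarrow> A 1 (I t) < A 2 j' \<Longrightarrow> \<not> A 2 j' < A 2 (J t)"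
    using E unfolding G12_edge_def by blast+
  have In: "\<And>t. t \<le> k \<Longrightarrow> I t \<le> n" using IJt Jn by (meson le_trans less_imp_le)
  have J1: "\<And>t. t \<le> k \<Longrightarrow> 1 \<le> J t" using IJt I1 by (meson le_trans less_imp_le)
  define m where "m = Min ((\<lambda>s. A 2 (J s)) ` {..k})"
  have "m \<in> (\<lambda>s. A 2 (J s)) ` {..k}" unfolding m_def by (rule Min_in) auto
  then obtain t where t: "t \<le> k" and mt: "m = A 2 (J t)" by auto
  have mle: "\<And>s. s \<le> k \<Longrightarrow> m \<le> A 2 (J s)" unfolding m_def by (rule Min_le) auto
  have mlt: "\<And>s. s \<le> k \<Longrightarrow> s \<noteq> t \<Longrightarrow> m < A 2 (J s)"
  proof -
    fix s assume s: "s \<le> k" "s \<noteq> t"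
    have "J s \<noteq> J t" using s t Jlt by (metis linorder_neqE_nat less_irrefl)
    hence "A 2 (J s) \<noteq> A 2 (J t)" using neqA[OF distinct, of 2 2 "J s" "J t"] s t J1 Jn by auto
    thus "m < A 2 (J s)" using mle[OF s(1)] mt by auto
  qed
  have ct: "A 1 (I t) < m" using C[OF t] mt unfolding G12_cond_def by auto
  define S where "S i j = {(r, c). r \<in> {1::nat, 2} \<and> c \<in> {i..j} \<and> A r c > A 1 i \<and> A r c > A 2 j}" for i j
  have finS: "finite (S i j)" for i j
    by (rule finite_subset[of _ "{1,2} \<times> {i..j}"]) (auto simp: S_def)
  have cardt: "card (S (I t) (J t)) \<le> k - 1" using C[OF t] unfolding G12_cond_def S_def by auto
  have "\<exists>u. t < u \<and> u \<le> k \<and> A 1 (I u) < m"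
  proof (rule ccontr)
    assume "\<not> ?thesis"
    hence big: "\<And>u. t < u \<Longrightarrow> u \<le> k \<Longrightarrow> m < A 1 (I u)"
    proof -
      fix u assume u: "t < u" "u \<le> k" "\<not> (\<exists>u. t < u \<and> u \<le> k \<and> A 1 (I u) < m)"
      have "A 1 (I u) \<noteq> A 2 (J t)" using neqA[OF distinct, of 1 2 "I u" "J t"] u t I1 In J1 Jn by auto
      thus "m < A 1 (I u)" using u mt by auto
    qed
    let ?X = "(\<lambda>u. (1::nat, I u)) ` {t<..k} \<union> (\<lambda>s. (2::nat, J s)) ` {..<t}"
    have sub: "?X \<subseteq> S (I t) (J t)"
    proof
      fix x assume "x \<in> ?X"
      then consider u where "t < u" "u \<le> k" "x = (1, I u)" | s where "s < t" "x = (2, J s)" by auto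
      then show "x \<in> S (I t) (J t)"
      proof cases
        case 1
        have "I t \<le> I u" "I u \<le> J t" using 1 t Ile Jle[of 0 t] IJ by (auto intro: order.trans[of _ "I k"] order.trans[of _ "J 0"] less_imp_le)
        moreover have "m < A 1 (I u)" using big 1 by auto
        ultimately show ?thesis using 1 ct mt unfolding S_def by auto
      next
        case 2
        have "I t \<le> J s" "J s \<le> J t" using 2 t Ile[of t k] Jle[of 0 s] Jlt[of s t] IJ by auto
        moreover have "m < A 2 (J s)" using mlt 2 t by auto
        ultimately show ?thesis using 2 ct mt unfolding S_def by auto
      qed
    qed
    have inj1: "inj_on (\<lambda>u. (1::nat, I u)) {t<..k}"
      by (rule inj_onI) (metis Pair_inject Ilt greaterThanAtMost_iff linorder_neqE_nat less_irrefl)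
    have inj2: "inj_on (\<lambda>s. (2::nat, J s)) {..<t}"
      using t by (intro inj_onI) (metis Pair_inject Jlt lessThan_iff linorder_neqE_nat less_irrefl order.strict_trans2 less_imp_le)
    have c1: "card ((\<lambda>u. (1::nat, I u)) ` {t<..k}) = k - t" using card_image[OF inj1] by simp
    have c2: "card ((\<lambda>s. (2::nat, J s)) ` {..<t}) = t" using card_image[OF inj2] by simp
    have "card ?X = (k - t) + t"
      by (subst card_Un_disjoint) (auto simp: c1 c2 simp del: One_nat_def)
    hence "k \<le> card (S (I t) (J t))" using t card_mono[OF finS sub] by auto
    thus False using cardt k by auto
  qed
  then obtain u where u: "t < u" "u \<le> k" "A 1 (I u) < m" by blast
  have "card (S (I u) (J t)) \<le> card (S (I t) (J t))"
    by (rule card_mono[OF finS]) (use u Ilt[of t u] ct mt in \<open>auto simp: S_def intro: order.strict_trans\<close>)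
  hence "G12_cond k A (I u) (J t)" using cardt u mt unfolding G12_cond_def S_def by auto
  moreover have "I u < J t" using u t IJ Ile[of u k] Jle[of 0 t] by auto
  moreover have "A 2 (J t) < A 2 (J u)" using mlt[of u] u mt by auto
  ultimately show False using N[of u "J t"] u t Jn mt by auto
qed

end
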